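(* Among all phylogenetic trees with $n$ leaves, the ones with maximum total cophenetic index are exactly the rooted caterpillars, and for a rooted caterpillar $K_n$ with $n$ leaves, $\Phi(K_n)=\binom{n}{3}$.
   Context: A phylogenetic tree with $n$ leaves is a rooted tree whose leaves are bijectively labeled by $\{1,\dots,n\}$, every internal node having at least two children; binary means every internal node has exactly two children. A rooted caterpillar is a binary phylogenetic tree all of whose internal nodes have a leaf child. The depth $\delta_T(v)$ is the number of arcs from the root to $v$; for leaves $i,j$, $\varphi_T(i,j)=\delta_T(LCA_T(i,j))$ ($LCA$ = lowest common ancestor), and $\Phi(T)=\sum_{1\le i<j\le n}\varphi_T(i,j)$ is the total cophenetic index. *)

theory Defs
  imports Main
begin

text \<open>Rooted trees with leaves labelled by naturals. The order of children in
  a Node is irrelevant for every notion below.\<close>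
datatype tree = Leaf nat | Node "tree list"

fun leaves :: "tree \<Rightarrow> nat list" where
  "leaves (Leaf a) = [a]"
| "leaves (Node cs) = concat (map leaves cs)"

fun subtrees :: "tree \<Rightarrow> tree set" where
  "subtrees (Leaf a) = {Leaf a}"
| "subtrees (Node cs) = insert (Node cs) (\<Union>c\<in>set cs. subtrees c)"

fun nodes_depth :: "tree \<Rightarrow> (tree \<times> nat) set" where
  "nodes_depth (Leaf a) = {(Leaf a, 0)}"
| "nodes_depth (Node cs) =
     insert (Node cs, 0) (\<Union>c\<in>set cs. (\<lambda>(s, d). (s, Suc d)) ` nodes_depth c)"

definition phylo :: "nat \<Rightarrow> tree \<Rightarrow> bool" where
  "phylo n t \<longleftrightarrow> (\<forall>cs. Node cs \<in> subtrees t \<longrightarrow> length cs \<ge> 2)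
      \<and> distinct (leaves t) \<and> set (leaves t) = {1..n}"

definition binary :: "tree \<Rightarrow> bool" where
  "binary t \<longleftrightarrow> (\<forall>cs. Node cs \<in> subtrees t \<longrightarrow> length cs = 2)"

definition caterpillar :: "tree \<Rightarrow> bool" where
  "caterpillar t \<longleftrightarrow> binary t \<and> (\<forall>cs. Node cs \<in> subtrees t \<longrightarrow> (\<exists>a. Leaf a \<in> set cs))"

text \<open>Depth of the lowest common ancestor of leaves i and j: the LCA is the
  deepest node whose clade contains both i and j.\<close>
definition phi :: "tree \<Rightarrow> nat \<Rightarrow> nat \<Rightarrow> nat" where
  "phi t i j = Max {d. \<exists>s. (s, d) \<in> nodes_depth t \<and> i \<in> set (leaves s) \<and> j \<in> set (leaves s)}"

definition Phi :: "tree \<Rightarrow> nat" where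
  "Phi t = (\<Sum>i\<in>set (leaves t). \<Sum>j\<in>{j \<in> set (leaves t). i < j}. phi t i j)"

end

theory Submission imports Defs begin

lemma c2_add: "(a+b) choose 2 = (a choose 2) + a*b + (b choose 2)"
  by (induction b) (auto simp: numeral_2_eq_2 algebra_simps)

lemma c3_add: "((a+b) choose 3) + (a choose 2) + (b choose 2)
   = ((a+1) choose 3) + ((b+1) choose 3) + (a choose 2)*b + a*(b choose 2)"
proof (induction b)
  case 0 then show ?case by (simp add: numeral_3_eq_3 numeral_2_eq_2)
next
  case (Suc b)
  have e1: "(a + Suc b) choose 3 = ((a+b) choose 3) + ((a+b) choose 2)"
    by (simp add: numeral_3_eq_3 numeral_2_eq_2)
  have e2: "Suc b choose 2 = (b choose 2) + b" by (simp add: numeral_2_eq_2)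
  have e3: "(Suc b + 1) choose 3 = ((b+1) choose 3) + (b choose 2) + b"
    by (simp add: numeral_3_eq_3 numeral_2_eq_2)
  show ?case using Suc c2_add[of a b] unfolding e1 e2 e3 by (simp add: algebra_simps)
qed

lemma lemA: assumes "1 \<le> a" "1 \<le> b"
  shows "((a+1) choose 3) + ((b+1) choose 3) \<le> (a+b) choose 3
    \<and> (((a+1) choose 3) + ((b+1) choose 3) = (a+b) choose 3 \<longleftrightarrow> a = 1 \<or> b = 1)"
proof -
  obtain a' b' where ab: "a = Suc a'" "b = Suc b'" using assms by (metis Suc_le_D One_nat_def)
  have "(a choose 2)*b + a*(b choose 2) = (a choose 2) + (b choose 2) + ((a choose 2)*b' + a'*(b choose 2))"
    unfolding ab by (simp add: algebra_simps)
  then have key: "(a+b) choose 3 = ((a+1) choose 3) + ((b+1) choose 3) + ((a choose 2)*b' + a'*(b choose 2))"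
    using c3_add[of a b] by simp
  have z1: "(a choose 2) = 0 \<longleftrightarrow> a' = 0" unfolding ab by (auto simp: numeral_2_eq_2)
  have z2: "(b choose 2) = 0 \<longleftrightarrow> b' = 0" unfolding ab by (auto simp: numeral_2_eq_2)
  show ?thesis using key z1 z2 ab by auto
qed


lemma sum_ge_len: "\<forall>x\<in>set xs. 1 \<le> (x::nat) \<Longrightarrow> length xs \<le> sum_list xs"
  by (induction xs) auto

lemma lemB: "xs \<noteq> [] \<Longrightarrow> \<forall>x\<in>set xs. 1 \<le> x \<Longrightarrow>
  (\<Sum>x\<leftarrow>xs. (x+1) choose 3) \<le> (sum_list xs + 2 - length xs) choose 3"
proof (induction xs)
  case Nil then show ?case by simp
next
  case (Cons x xs)
  show ?case
  proof (cases "xs = []")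
    case True then show ?thesis by simp
  next
    case False
    have h: "length xs \<le> sum_list xs" using sum_ge_len Cons.prems by auto
    define m where "m = sum_list xs + 1 - length xs"
    have m1: "1 \<le> m" using h m_def by simp
    have IH: "(\<Sum>x\<leftarrow>xs. (x+1) choose 3) \<le> (m+1) choose 3"
      using Cons False h unfolding m_def by (simp add: Suc_diff_le)
    have x1: "1 \<le> x" using Cons.prems by simp
    have "(\<Sum>x\<leftarrow>x#xs. (x+1) choose 3) \<le> ((x+1) choose 3) + ((m+1) choose 3)" using IH by simp
    also have "\<dots> \<le> (x+m) choose 3" using lemA[OF x1 m1] by simp
    also have "x + m = sum_list (x#xs) + 2 - length (x#xs)" using h m_def by simp
    finally show ?thesis .
  qed
qed

lemma lemL: assumes "2 \<le> length xs" "\<forall>x\<in>set xs. 1 \<le> x"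
  shows "(\<Sum>x\<leftarrow>xs. (x+1) choose 3) \<le> sum_list xs choose 3 \<and>
    ((\<Sum>x\<leftarrow>xs. (x+1) choose 3) = sum_list xs choose 3 \<longleftrightarrow> length xs = 2 \<and> 1 \<in> set xs)"
proof (cases "length xs = 2")
  case True
  then obtain a b where xs: "xs = [a,b]"
    by (metis One_nat_def Suc_1 length_0_conv length_Suc_conv)
  show ?thesis using lemA[of a b] assms unfolding xs by auto
next
  case False
  define S where "S = sum_list xs"
  have h: "length xs \<le> S" using sum_ge_len assms S_def by auto
  have "(\<Sum>x\<leftarrow>xs. (x+1) choose 3) \<le> (S + 2 - length xs) choose 3"
    using lemB assms S_def by (metis list.size(3) not_numeral_le_zero)
  also have "\<dots> \<le> (S - 1) choose 3" using False assms h by (intro binomial_right_mono) simp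
  also have "\<dots> < S choose 3"
  proof -
    obtain k where k: "S = Suc (Suc (Suc k))" using False assms h
      by (metis Suc_le_D add_2_eq_Suc le_add_diff_inverse2 le_antisym not_less_eq_eq numeral_2_eq_2 order.trans)
    show ?thesis unfolding k by (simp add: numeral_3_eq_3)
  qed
  finally show ?thesis using False S_def by simp
qed


definition good :: "tree \<Rightarrow> bool" where
  "good t \<longleftrightarrow> (\<forall>cs. Node cs \<in> subtrees t \<longrightarrow> length cs \<ge> 2) \<and> distinct (leaves t)"

fun PhiR :: "tree \<Rightarrow> nat" where
  "PhiR (Leaf a) = 0"
| "PhiR (Node cs) = (\<Sum>c\<leftarrow>cs. PhiR c + (length (leaves c) choose 2))"

lemma self_subtrees: "t \<in> subtrees t" by (cases t) auto

lemma child_subtrees: "c \<in> set cs \<Longrightarrow> subtrees c \<subseteq> subtrees (Node cs)" by auto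

lemma good_child: "good (Node cs) \<Longrightarrow> c \<in> set cs \<Longrightarrow> good c"
  unfolding good_def using child_subtrees by (auto simp: distinct_concat_iff)

lemma good_Node_len: "good (Node cs) \<Longrightarrow> 2 \<le> length cs"
  unfolding good_def by auto

lemma leaves_ne: "good t \<Longrightarrow> leaves t \<noteq> []"
proof (induction t)
  case (Leaf a) then show ?case by simp
next
  case (Node cs)
  have "2 \<le> length cs" using good_Node_len Node.prems by blast
  then obtain c where c: "c \<in> set cs" by (cases cs) auto
  then have "leaves c \<noteq> []" using Node.IH good_child Node.prems by blast
  then show ?case using c by auto
qed

lemma nl_Node: "good (Node cs) \<Longrightarrow> 2 \<le> length (leaves (Node cs))"
proof -
  assume g: "good (Node cs)"
  have l: "2 \<le> length cs" using good_Node_len g by blast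
  have "\<forall>c\<in>set cs. 1 \<le> length (leaves c)" using leaves_ne good_child g
    by (metis One_nat_def Suc_leI length_greater_0_conv)
  then have "length cs \<le> sum_list (map (\<lambda>c. length (leaves c)) cs)"
    using sum_ge_len[of "map (\<lambda>c. length (leaves c)) cs"] by auto
  then show ?thesis using l by (simp add: length_concat comp_def)
qed

lemma nl_one: "good t \<Longrightarrow> length (leaves t) = 1 \<longleftrightarrow> (\<exists>a. t = Leaf a)"
  by (cases t) (use nl_Node in fastforce)+

lemma caterpillar_Leaf: "caterpillar (Leaf a)"
  unfolding caterpillar_def binary_def by simp

lemma caterpillar_Node: "caterpillar (Node cs) \<longleftrightarrow>
  length cs = 2 \<and> (\<exists>a. Leaf a \<in> set cs) \<and> (\<forall>c\<in>set cs. caterpillar c)"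
  unfolding caterpillar_def binary_def by auto

lemma sum_list_le_eq: "\<forall>x\<in>set xs. f x \<le> (g x::nat) \<Longrightarrow>
  sum_list (map f xs) \<le> sum_list (map g xs) \<and>
  (sum_list (map f xs) = sum_list (map g xs) \<longleftrightarrow> (\<forall>x\<in>set xs. f x = g x))"
proof (induction xs)
  case Nil then show ?case by simp
next
  case (Cons a xs)
  then show ?case by (auto simp: add_mono)
qed

lemma main_ineq: "good t \<Longrightarrow> PhiR t \<le> length (leaves t) choose 3 \<and>
   (PhiR t = length (leaves t) choose 3 \<longleftrightarrow> caterpillar t)"
proof (induction t)
  case (Leaf a) then show ?case by (simp add: caterpillar_Leaf)
next
  case (Node cs)
  define nl where "nl = (\<lambda>c. length (leaves c))"
  have IH: "\<forall>c\<in>set cs. PhiR c \<le> nl c choose 3 \<and> (PhiR c = nl c choose 3 \<longleftrightarrow> caterpillar c)"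
    using Node good_child nl_def by blast
  have pos: "\<forall>x\<in>set (map nl cs). 1 \<le> x" using leaves_ne good_child Node.prems nl_def
    by (auto simp: Suc_leI)
  have len: "2 \<le> length (map nl cs)" using good_Node_len Node.prems by simp
  have S1: "PhiR (Node cs) = (\<Sum>c\<leftarrow>cs. PhiR c + (nl c choose 2))" by (simp add: nl_def)
  have e: "\<And>m. (m choose 3) + (m choose 2) = (m+1) choose 3" by (simp add: numeral_3_eq_3 numeral_2_eq_2)
  have S2: "(\<Sum>c\<leftarrow>cs. (nl c choose 3) + (nl c choose 2)) = (\<Sum>x\<leftarrow>map nl cs. (x+1) choose 3)"
    using e by (simp add: comp_def)
  have cmp: "\<forall>c\<in>set cs. PhiR c + (nl c choose 2) \<le> (nl c choose 3) + (nl c choose 2)" using IH by auto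
  note A1 = sum_list_le_eq[OF cmp]
  note A2 = lemL[OF len pos]
  have tot: "length (leaves (Node cs)) = sum_list (map nl cs)" by (simp add: length_concat nl_def comp_def)
  have le: "PhiR (Node cs) \<le> length (leaves (Node cs)) choose 3"
  proof -
    have "PhiR (Node cs) \<le> (\<Sum>c\<leftarrow>cs. (nl c choose 3) + (nl c choose 2))" using A1 S1 by simp
    also have "\<dots> \<le> length (leaves (Node cs)) choose 3" using A2 S2 tot by simp
    finally show ?thesis .
  qed
  have "PhiR (Node cs) = length (leaves (Node cs)) choose 3 \<longleftrightarrow>
    (\<forall>c\<in>set cs. PhiR c = nl c choose 3) \<and> length cs = 2 \<and> 1 \<in> set (map nl cs)"
  proof -
    have "PhiR (Node cs) = length (leaves (Node cs)) choose 3 \<longleftrightarrow>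
      PhiR (Node cs) = (\<Sum>c\<leftarrow>cs. (nl c choose 3) + (nl c choose 2)) \<and>
      (\<Sum>c\<leftarrow>cs. (nl c choose 3) + (nl c choose 2)) = length (leaves (Node cs)) choose 3"
      using A1 A2 S1 S2 tot by (metis le_antisym)
    then show ?thesis using A1 A2 S1 S2 tot by simp
  qed
  also have "\<dots> \<longleftrightarrow> caterpillar (Node cs)"
  proof -
    have "1 \<in> set (map nl cs) \<longleftrightarrow> (\<exists>a. Leaf a \<in> set cs)"
      using nl_one good_child Node.prems unfolding nl_def by force
    then show ?thesis using IH caterpillar_Node by auto
  qed
  finally show ?case using le by simp
qed


lemma fin_nd: "finite (nodes_depth t)"
  by (induction t) auto

lemma nd_leaves: "(s, d) \<in> nodes_depth t \<Longrightarrow> set (leaves s) \<subseteq> set (leaves t)"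
  by (induction t arbitrary: s d) fastforce+

lemma nd_self: "(t, 0) \<in> nodes_depth t" by (cases t) auto

definition DS :: "tree \<Rightarrow> nat \<Rightarrow> nat \<Rightarrow> nat set" where
  "DS t i j = {d. \<exists>s. (s, d) \<in> nodes_depth t \<and> i \<in> set (leaves s) \<and> j \<in> set (leaves s)}"

lemma phi_DS: "phi t i j = Max (DS t i j)" unfolding phi_def DS_def by simp

lemma fin_DS: "finite (DS t i j)"
proof -
  have "DS t i j \<subseteq> snd ` nodes_depth t" unfolding DS_def by force
  then show ?thesis using fin_nd finite_surj by blast
qed

lemma DS_ne: "i \<in> set (leaves t) \<Longrightarrow> j \<in> set (leaves t) \<Longrightarrow> 0 \<in> DS t i j"
  unfolding DS_def using nd_self by blast

lemma DS_empty: "i \<notin> set (leaves t) \<Longrightarrow> DS t i j = {}"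
  unfolding DS_def using nd_leaves by blast

lemma DS_Node: "i \<in> set (leaves (Node cs)) \<Longrightarrow> j \<in> set (leaves (Node cs)) \<Longrightarrow>
  DS (Node cs) i j = insert 0 (\<Union>c\<in>set cs. Suc ` DS c i j)"
proof (rule set_eqI)
  fix x
  assume ij: "i \<in> set (leaves (Node cs))" "j \<in> set (leaves (Node cs))"
  show "x \<in> DS (Node cs) i j \<longleftrightarrow> x \<in> insert 0 (\<Union>c\<in>set cs. Suc ` DS c i j)"
  proof
    assume "x \<in> DS (Node cs) i j"
    then obtain s where s: "(s, x) \<in> nodes_depth (Node cs)" "i \<in> set (leaves s)" "j \<in> set (leaves s)"
      unfolding DS_def by blast
    show "x \<in> insert 0 (\<Union>c\<in>set cs. Suc ` DS c i j)"
    proof (cases "(s, x) = (Node cs, 0)")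
      case True then show ?thesis by simp
    next
      case False
      then obtain c s' d' where "c \<in> set cs" "(s', d') \<in> nodes_depth c" "(s, x) = (s', Suc d')"
        using s(1) by auto
      then show ?thesis using s unfolding DS_def by blast
    qed
  next
    assume "x \<in> insert 0 (\<Union>c\<in>set cs. Suc ` DS c i j)"
    then show "x \<in> DS (Node cs) i j"
    proof
      assume "x = 0" then show ?thesis using DS_ne[OF ij] by simp
    next
      assume "x \<in> (\<Union>c\<in>set cs. Suc ` DS c i j)"
      then obtain c d s where c: "c \<in> set cs" "x = Suc d" "(s, d) \<in> nodes_depth c"
         "i \<in> set (leaves s)" "j \<in> set (leaves s)" unfolding DS_def by blast
      then have "(s, x) \<in> nodes_depth (Node cs)" by force
      then show ?thesis using c unfolding DS_def by blast
    qed
  qed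
qed

lemma uniq_child: "distinct (concat (map leaves cs)) \<Longrightarrow> c \<in> set cs \<Longrightarrow> c' \<in> set cs \<Longrightarrow>
   x \<in> set (leaves c) \<Longrightarrow> x \<in> set (leaves c') \<Longrightarrow> c = c'"
  by (induction cs) auto

lemma distinct_children: "distinct (concat (map leaves cs)) \<Longrightarrow> \<forall>c\<in>set cs. leaves c \<noteq> [] \<Longrightarrow> distinct cs"
proof (induction cs)
  case Nil then show ?case by simp
next
  case (Cons a cs)
  have "a \<notin> set cs"
  proof
    assume a: "a \<in> set cs"
    obtain x where x: "x \<in> set (leaves a)" using Cons.prems by (meson list.set_sel(1) list.set_intros(1))
    then have "x \<in> set (concat (map leaves cs))" using a by auto
    then show False using x Cons.prems(1) by auto
  qed
  then show ?case using Cons by auto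
qed


lemma phi_same: assumes "distinct (concat (map leaves cs))" "c \<in> set cs"
  "i \<in> set (leaves c)" "j \<in> set (leaves c)"
  shows "phi (Node cs) i j = Suc (phi c i j)"
proof -
  have ij: "i \<in> set (leaves (Node cs))" "j \<in> set (leaves (Node cs))" using assms by auto
  have "(\<Union>c'\<in>set cs. Suc ` DS c' i j) = Suc ` DS c i j"
  proof -
    have "\<And>c'. c' \<in> set cs \<Longrightarrow> c' \<noteq> c \<Longrightarrow> DS c' i j = {}"
      using DS_empty uniq_child assms by blast
    then show ?thesis using assms(2) by blast
  qed
  then have e: "DS (Node cs) i j = insert 0 (Suc ` DS c i j)" using DS_Node[OF ij] by simp
  have ne: "DS c i j \<noteq> {}" using DS_ne assms by blast
  have "Max (Suc ` DS c i j) = Suc (Max (DS c i j))"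
    using mono_Max_commute[of Suc "DS c i j"] fin_DS ne by (simp add: mono_def)
  then show ?thesis unfolding phi_DS e using fin_DS ne by simp
qed

lemma phi_diff: assumes "distinct (concat (map leaves cs))" "c \<in> set cs" "c' \<in> set cs" "c \<noteq> c'"
  "i \<in> set (leaves c)" "j \<in> set (leaves c')"
  shows "phi (Node cs) i j = 0"
proof -
  have ij: "i \<in> set (leaves (Node cs))" "j \<in> set (leaves (Node cs))" using assms by auto
  have "\<And>c''. c'' \<in> set cs \<Longrightarrow> DS c'' i j = {}"
  proof -
    fix c'' assume c'': "c'' \<in> set cs"
    show "DS c'' i j = {}"
    proof (cases "i \<in> set (leaves c'') \<and> j \<in> set (leaves c'')")
      case True
      then have "c'' = c" "c'' = c'" using uniq_child assms c'' by blast+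
      then show ?thesis using assms by simp
    next
      case False then show ?thesis unfolding DS_def using nd_leaves by blast
    qed
  qed
  then have "DS (Node cs) i j = {0}" using DS_Node[OF ij] by simp
  then show ?thesis unfolding phi_DS by simp
qed

lemma pairs_card: "finite A \<Longrightarrow> (\<Sum>i\<in>A. card {j\<in>A. i < (j::nat)}) = card A choose 2"
proof (induction A rule: finite_linorder_max_induct)
  case empty then show ?case by simp
next
  case (insert b A)
  have bA: "b \<notin> A" using insert by auto
  have e1: "{j\<in>insert b A. b < j} = {}" using insert by auto
  have e2: "\<And>i. i \<in> A \<Longrightarrow> card {j\<in>insert b A. i < j} = Suc (card {j\<in>A. i < j})"
  proof -
    fix i assume i: "i \<in> A"
    have "{j\<in>insert b A. i < j} = insert b {j\<in>A. i < j}" using insert i by auto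
    then show "card {j\<in>insert b A. i < j} = Suc (card {j\<in>A. i < j})" using insert bA by simp
  qed
  have "(\<Sum>i\<in>insert b A. card {j\<in>insert b A. i < j}) = (\<Sum>i\<in>A. Suc (card {j\<in>A. i < j}))"
    using insert bA e1 e2 by simp
  also have "\<dots> = card A + (card A choose 2)" 
  proof -
    have "(\<Sum>i\<in>A. Suc (card {j\<in>A. i < j})) = (\<Sum>i\<in>A. 1 + card {j\<in>A. i < j})" by simp
    also have "\<dots> = card A + (\<Sum>i\<in>A. card {j\<in>A. i < j})" by (simp only: sum.distrib) simp
    finally show ?thesis using insert by simp
  qed
  also have "\<dots> = card (insert b A) choose 2" using insert bA by (simp add: numeral_2_eq_2)
  finally show ?case .
qed


lemma Phi_PhiR: "good t \<Longrightarrow> Phi t = PhiR t"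
proof (induction t)
  case (Leaf a) then show ?case by (simp add: Phi_def)
next
  case (Node cs)
  let ?T = "Node cs"
  define L where "L = set (leaves ?T)"
  have dist: "distinct (concat (map leaves cs))" using Node.prems unfolding good_def by simp
  have IH: "\<And>c. c \<in> set cs \<Longrightarrow> Phi c = PhiR c" using Node good_child by blast
  have LU: "L = (\<Union>c\<in>set cs. set (leaves c))" unfolding L_def by simp
  have inner: "\<And>c i. c \<in> set cs \<Longrightarrow> i \<in> set (leaves c) \<Longrightarrow>
     (\<Sum>j\<in>{j\<in>L. i < j}. phi ?T i j) = (\<Sum>j\<in>{j\<in>set (leaves c). i < j}. Suc (phi c i j))"
  proof -
    fix c i assume c: "c \<in> set cs" and i: "i \<in> set (leaves c)"
    show "(\<Sum>j\<in>{j\<in>L. i < j}. phi ?T i j) = (\<Sum>j\<in>{j\<in>set (leaves c). i < j}. Suc (phi c i j))"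
    proof (rule sum.mono_neutral_cong_right)
      show "finite {j\<in>L. i < j}" unfolding L_def by simp
      show "{j\<in>set (leaves c). i < j} \<subseteq> {j\<in>L. i < j}" using c LU by auto
      show "\<forall>j\<in>{j\<in>L. i < j} - {j\<in>set (leaves c). i < j}. phi ?T i j = 0"
      proof
        fix j assume j: "j \<in> {j\<in>L. i < j} - {j\<in>set (leaves c). i < j}"
        then obtain c' where c': "c' \<in> set cs" "j \<in> set (leaves c')" using LU by auto
        have "c \<noteq> c'" using j c' by auto
        then show "phi ?T i j = 0" using phi_diff[OF dist c c'(1) _ i c'(2)] by simp
      qed
      show "\<And>j. j \<in> {j\<in>set (leaves c). i < j} \<Longrightarrow> phi ?T i j = Suc (phi c i j)"
        using phi_same[OF dist c i] by simp
    qed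
  qed
  have "Phi ?T = (\<Sum>i\<in>L. \<Sum>j\<in>{j\<in>L. i < j}. phi ?T i j)" unfolding Phi_def L_def by simp
  also have "\<dots> = (\<Sum>c\<in>set cs. \<Sum>i\<in>set (leaves c). \<Sum>j\<in>{j\<in>L. i < j}. phi ?T i j)"
    unfolding LU
  proof (rule sum.UNION_disjoint)
    show "finite (set cs)" by simp
    show "\<forall>c\<in>set cs. finite (set (leaves c))" by simp
    show "\<forall>c\<in>set cs. \<forall>c'\<in>set cs. c \<noteq> c' \<longrightarrow> set (leaves c) \<inter> set (leaves c') = {}"
      using uniq_child[OF dist] by blast
  qed
  also have "\<dots> = (\<Sum>c\<in>set cs. \<Sum>i\<in>set (leaves c). \<Sum>j\<in>{j\<in>set (leaves c). i < j}. Suc (phi c i j))"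
    using inner by simp
  also have "\<dots> = (\<Sum>c\<in>set cs. PhiR c + (length (leaves c) choose 2))"
  proof (rule sum.cong)
    fix c assume c: "c \<in> set cs"
    have dc: "distinct (leaves c)" using good_child[OF Node.prems c] unfolding good_def by simp
    have "(\<Sum>i\<in>set (leaves c). \<Sum>j\<in>{j\<in>set (leaves c). i < j}. Suc (phi c i j))
       = (\<Sum>i\<in>set (leaves c). card {j\<in>set (leaves c). i < j} + (\<Sum>j\<in>{j\<in>set (leaves c). i < j}. phi c i j))"
      by (intro sum.cong refl) (simp add: sum_Suc)
    also have "\<dots> = (card (set (leaves c)) choose 2) + Phi c"
      unfolding Phi_def by (simp add: sum.distrib pairs_card)
    also have "\<dots> = PhiR c + (length (leaves c) choose 2)" using IH[OF c] dc by (simp add: distinct_card)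
    finally show "(\<Sum>i\<in>set (leaves c). \<Sum>j\<in>{j\<in>set (leaves c). i < j}. Suc (phi c i j))
       = PhiR c + (length (leaves c) choose 2)" .
  qed simp
  also have "\<dots> = PhiR ?T"
  proof -
    have "distinct cs" using distinct_children[OF dist] leaves_ne good_child Node.prems by blast
    then show ?thesis by (simp add: sum_list_distinct_conv_sum_set)
  qed
  finally show ?case .
qed


lemma phylo_good: "phylo n T \<Longrightarrow> good T \<and> length (leaves T) = n"
  unfolding phylo_def good_def by (metis card_atLeastAtMost diff_Suc_1 distinct_card)

lemma phylo_caterpillar_Phi: "phylo n T \<Longrightarrow> Phi T \<le> n choose 3 \<and> (Phi T = n choose 3 \<longleftrightarrow> caterpillar T)"
  using phylo_good main_ineq Phi_PhiR by metis

fun K :: "nat \<Rightarrow> tree" where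
  "K 0 = Leaf 1"
| "K (Suc 0) = Leaf 1"
| "K (Suc (Suc m)) = Node [Leaf (Suc (Suc m)), K (Suc m)]"

lemma K_props: "caterpillar (K (Suc m)) \<and> distinct (leaves (K (Suc m))) \<and> set (leaves (K (Suc m))) = {1..Suc m}"
proof (induction m)
  case 0 then show ?case by (simp add: caterpillar_Leaf)
next
  case (Suc m)
  have c: "caterpillar (K (Suc (Suc m)))" using Suc by (auto simp: caterpillar_Node caterpillar_Leaf)
  moreover have "distinct (leaves (K (Suc (Suc m))))" using Suc by simp
  moreover have "set (leaves (K (Suc (Suc m)))) = {1..Suc (Suc m)}" using Suc by auto
  ultimately show ?case by blast
qed

lemma K_phylo: "1 \<le> n \<Longrightarrow> phylo n (K n) \<and> caterpillar (K n)"
proof -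
  assume "1 \<le> n"
  then obtain m where n: "n = Suc m" by (cases n) auto
  have p: "caterpillar (K n)" "distinct (leaves (K n))" "set (leaves (K n)) = {1..n}"
    using K_props[of m] n by auto
  then show ?thesis unfolding phylo_def caterpillar_def binary_def by auto
qed

theorem mainTheorem7:
  fixes n :: nat
  shows "\<forall>T. phylo n T \<longrightarrow> ((\<forall>T'. phylo n T' \<longrightarrow> Phi T' \<le> Phi T) \<longleftrightarrow> caterpillar T)
       \<and> (\<forall>T. phylo n T \<and> caterpillar T \<longrightarrow> Phi T = n choose 3)"
proof (intro conjI allI impI)
  fix T assume T: "phylo n T"
  have n1: "1 \<le> n"
  proof -
    have "leaves T \<noteq> []" using leaves_ne phylo_good T by blast
    then have "set (leaves T) \<noteq> {}" by simp
    then show ?thesis using T unfolding phylo_def by auto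
  qed
  note KK = K_phylo[OF n1]
  show "(\<forall>T'. phylo n T' \<longrightarrow> Phi T' \<le> Phi T) \<longleftrightarrow> caterpillar T"
  proof
    assume "\<forall>T'. phylo n T' \<longrightarrow> Phi T' \<le> Phi T"
    then have "Phi (K n) \<le> Phi T" using KK by blast
    then show "caterpillar T" using phylo_caterpillar_Phi[OF T] phylo_caterpillar_Phi[of n "K n"] KK
      by auto
  next
    assume "caterpillar T"
    then show "\<forall>T'. phylo n T' \<longrightarrow> Phi T' \<le> Phi T" using phylo_caterpillar_Phi[OF T] phylo_caterpillar_Phi
      by auto
  qed
next
  fix T assume "phylo n T \<and> caterpillar T"
  then show "Phi T = n choose 3" using phylo_caterpillar_Phi by blast
qed

end
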